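(* Let $\theta^*\in\mathbb{R}^n$, let $\phi:\mathbb{R}_{\ge0}\to\mathbb{R}^n$ be piecewise continuous with $|\phi(t)|\le M$ for all $t\ge0$ (some $M>0$), and $y^*(t):=\phi^T(t)\theta^*$. Let $t_1,\dots,t_N\ge0$ be such that $\mathcal{D}=[\phi(t_1),\dots,\phi(t_N)]$ has rank $n$. Let $\beta,\gamma,\mu>0$ with $\beta\ge2\gamma/\mu$, $\mathcal{N}_t:=1+\mu\phi^T(t)\phi(t)$, and $$B(\theta,\mu):=\sum_{k=1}^N\frac{\phi(t_k)}{1+\mu\phi^T(t_k)\phi(t_k)}\big(\phi^T(t_k)\theta-y^*(t_k)\big).$$ Then $(\theta^*,\theta^* )$ is uniformly globally asymptotically stable for the system in $(\theta,\vartheta)\in\mathbb{R}^{2n}$ $$\dot\theta=-\beta(\theta-\vartheta),\qquad\dot\vartheta=-\gamma\Big(\frac{1}{\mathcal{N}_t}\phi(t)\big(\phi^T(t)\theta-y^*(t)\big)+B(\theta,\mu)\Big).$$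
   Context: No persistent excitation is assumed. For a system $\dot x=f(x,t)$ with equilibrium $x^*$: uniformly globally stable (UGS) means there is a class-$\mathcal{K}_\infty$ function $\kappa$ with $|x(t)-x^*|\le\kappa(|x_\circ-x^*|)$ for all $t\ge t_\circ$, for every solution from every $(x_\circ,t_\circ)$; uniformly globally attractive (UGA) means for each $r,\sigma>0$ there is $T'>0$ with $|x_\circ-x^*|\le r\Rightarrow|x(t)-x^*|\le\sigma$ for all $t\ge t_\circ+T'$, uniformly in $t_\circ\ge0$; UGAS means UGS and UGA. *)

theory Defs
  imports "HOL-Analysis.Analysis"
begin

text \<open>Class-K-infinity functions on the nonnegative reals.\<close>
definition class_K_inf :: "(real \<Rightarrow> real) \<Rightarrow> bool" where
  "class_K_inf \<kappa> \<longleftrightarrow> continuous_on {0..} \<kappa> \<and> \<kappa> 0 = 0 \<and>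
     strict_mono_on {0..} \<kappa> \<and> filterlim \<kappa> at_top at_top"

text \<open>Piecewise continuity on the half line t >= 0: on every compact interval
  there are only finitely many discontinuities, and at each of them the
  one-sided limits exist.\<close>
definition piecewise_continuous_nonneg :: "(real \<Rightarrow> 'a::topological_space) \<Rightarrow> bool" where
  "piecewise_continuous_nonneg \<phi> \<longleftrightarrow>
     (\<forall>T\<ge>0. \<exists>S. finite S \<and>
        (\<forall>t\<in>{0..T} - S. continuous (at t within {0..}) \<phi>) \<and>
        (\<forall>s\<in>S. s > 0 \<longrightarrow> (\<exists>l. (\<phi> \<longlongrightarrow> l) (at_left s))) \<and>
        (\<forall>s\<in>S. \<exists>l. (\<phi> \<longlongrightarrow> l) (at_right s)))"

text \<open>A (Caratheodory) solution of x' = f x t on [t0, infinity), in integral form.\<close>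
definition is_solution ::
  "('x::euclidean_space \<Rightarrow> real \<Rightarrow> 'x) \<Rightarrow> real \<Rightarrow> (real \<Rightarrow> 'x) \<Rightarrow> bool" where
  "is_solution f t0 x \<longleftrightarrow>
     (\<forall>t\<ge>t0. ((\<lambda>s. f (x s) s) has_integral (x t - x t0)) {t0..t})"

definition UGS :: "('x::euclidean_space \<Rightarrow> real \<Rightarrow> 'x) \<Rightarrow> 'x \<Rightarrow> bool" where
  "UGS f xs \<longleftrightarrow> (\<exists>\<kappa>. class_K_inf \<kappa> \<and>
     (\<forall>t0\<ge>0. \<forall>x. is_solution f t0 x \<longrightarrow>
        (\<forall>t\<ge>t0. norm (x t - xs) \<le> \<kappa> (norm (x t0 - xs)))))"

definition UGA :: "('x::euclidean_space \<Rightarrow> real \<Rightarrow> 'x) \<Rightarrow> 'x \<Rightarrow> bool" where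
  "UGA f xs \<longleftrightarrow> (\<forall>r>0. \<forall>\<sigma>>0. \<exists>T'>0.
     \<forall>t0\<ge>0. \<forall>x. is_solution f t0 x \<longrightarrow> norm (x t0 - xs) \<le> r \<longrightarrow>
        (\<forall>t\<ge>t0 + T'. norm (x t - xs) \<le> \<sigma>))"

definition UGAS :: "('x::euclidean_space \<Rightarrow> real \<Rightarrow> 'x) \<Rightarrow> 'x \<Rightarrow> bool" where
  "UGAS f xs \<longleftrightarrow> UGS f xs \<and> UGA f xs"

end

theory Submission
  imports Defs
begin


lemma rank_lower:
  fixes p :: "'m::finite \<Rightarrow> real^'n" and w :: "'m \<Rightarrow> real"
  assumes rk: "rank ((\<chi> i k. p k $ i) :: real^'m^'n) = CARD('n)"
    and wpos: "\<And>k. w k > 0" and wle: "\<And>k. w k \<le> 1"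
  shows "\<exists>c>0. \<forall>e. c * (norm e)^2 \<le> (\<Sum>k\<in>UNIV. w k * (p k \<bullet> e)^2)"
proof -
  define D where "D = ((\<chi> i k. p k $ i) :: real^'m^'n)"
  have "rank (transpose D) = CARD('n)" using rk rank_transpose D_def by metis
  hence inj: "inj ((*v) (transpose D))" using full_rank_injective by blast
  have Dv: "transpose D *v e = (\<chi> k. p k \<bullet> e)" for e
    by (simp add: D_def transpose_def matrix_vector_mult_def inner_vec_def vec_eq_iff mult.commute)
  define L where "L e = (\<chi> k. w k * (p k \<bullet> e))" for e :: "real^'n"
  have bl: "bounded_linear L"
    unfolding linear_conv_bounded_linear[symmetric]
    by (rule linearI) (simp_all add: L_def vec_eq_iff inner_add_right algebra_simps)
  have "\<forall>x\<in>UNIV. L x = 0 \<longrightarrow> x = 0"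
  proof (intro ballI impI)
    fix x assume "L x = 0"
    hence "p k \<bullet> x = 0" for k using wpos[of k] by (simp add: L_def vec_eq_iff) (metis less_irrefl)
    hence "transpose D *v x = transpose D *v 0" unfolding Dv by (simp add: vec_eq_iff)
    thus "x = 0" using inj unfolding inj_def by blast
  qed
  then obtain c where c: "c > 0" "\<And>x. norm (L x) \<ge> c * norm x"
    using injective_imp_isometric[OF closed_UNIV subspace_UNIV bl] by blast
  have "c^2 * (norm e)^2 \<le> (\<Sum>k\<in>UNIV. w k * (p k \<bullet> e)^2)" for e
  proof -
    have "c^2 * (norm e)^2 = (c * norm e)^2" by (simp add: power_mult_distrib)
    also have "\<dots> \<le> (norm (L e))^2" using c(2)[of e] c(1) by (intro power_mono) auto
    also have "\<dots> = (\<Sum>k\<in>UNIV. (w k * (p k \<bullet> e))^2)"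
      unfolding power2_norm_eq_inner by (simp only: inner_vec_def L_def vec_lambda_beta power2_eq_square inner_real_def)
    also have "\<dots> \<le> (\<Sum>k\<in>UNIV. w k * (p k \<bullet> e)^2)"
    proof (intro sum_mono)
      fix k
      have "w k * w k \<le> w k" using wpos[of k] wle[of k] by (simp add: mult_le_cancel_left1)
      hence "(w k * w k) * (p k \<bullet> e)^2 \<le> w k * (p k \<bullet> e)^2" by (intro mult_right_mono) auto
      thus "(w k * (p k \<bullet> e))^2 \<le> w k * (p k \<bullet> e)^2" by (simp add: power_mult_distrib power2_eq_square mult_ac)
    qed
    finally show ?thesis .
  qed
  thus ?thesis using c(1) by (intro exI[of _ "c^2"]) auto
qed


lemma key_ineq:
  fixes e z \<phi> :: "real^'n" and p :: "'m::finite \<Rightarrow> real^'n" and w :: "'m \<Rightarrow> real"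
  assumes bp: "\<beta> > 0" and gp: "\<gamma> > 0" and mp: "\<mu> > 0" and wt0: "wt \<ge> 0"
    and wt1: "wt * (\<phi> \<bullet> \<phi>) \<le> 1 / \<mu>"
  shows "(e - z) \<bullet> (- \<gamma> *\<^sub>R (wt *\<^sub>R ((\<phi> \<bullet> e) *\<^sub>R \<phi>) + (\<Sum>k\<in>UNIV. w k *\<^sub>R ((p k \<bullet> e) *\<^sub>R p k))))
     + z \<bullet> (- \<beta> *\<^sub>R z - (- \<gamma> *\<^sub>R (wt *\<^sub>R ((\<phi> \<bullet> e) *\<^sub>R \<phi>) + (\<Sum>k\<in>UNIV. w k *\<^sub>R ((p k \<bullet> e) *\<^sub>R p k)))))
     + (2 * \<gamma> / \<beta>) * (\<Sum>k\<in>UNIV. w k * (p k \<bullet> e) * (p k \<bullet> (- \<beta> *\<^sub>R z)))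
     \<le> - (\<beta> - \<gamma> / \<mu>) * (norm z)^2 - \<gamma> * (\<Sum>k\<in>UNIV. w k * (p k \<bullet> e)^2)"
proof -
  define a where "a = \<phi> \<bullet> e"
  define b where "b = \<phi> \<bullet> z"
  define SA where "SA = (\<Sum>k\<in>UNIV. w k * (p k \<bullet> e)^2)"
  define SB where "SB = (\<Sum>k\<in>UNIV. w k * (p k \<bullet> e) * (p k \<bullet> z))"
  define G where "G = wt *\<^sub>R ((\<phi> \<bullet> e) *\<^sub>R \<phi>) + (\<Sum>k\<in>UNIV. w k *\<^sub>R ((p k \<bullet> e) *\<^sub>R p k))"
  have eG: "e \<bullet> G = wt * a^2 + SA"
    by (simp add: G_def a_def SA_def inner_add_right inner_sum_right power2_eq_square inner_commute mult_ac)
  have zG: "z \<bullet> G = wt * a * b + SB"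
    by (simp add: G_def a_def b_def SB_def inner_add_right inner_sum_right inner_commute mult_ac)
  have t3: "(\<Sum>k\<in>UNIV. w k * (p k \<bullet> e) * (p k \<bullet> (- \<beta> *\<^sub>R z))) = - \<beta> * SB"
    by (simp add: SB_def sum_distrib_left mult_ac)
  have lhs: "(e - z) \<bullet> (- \<gamma> *\<^sub>R G) + z \<bullet> (- \<beta> *\<^sub>R z - (- \<gamma> *\<^sub>R G))
      + (2 * \<gamma> / \<beta>) * (- \<beta> * SB) = - \<gamma> * wt * a^2 + 2 * \<gamma> * wt * a * b - \<gamma> * SA - \<beta> * (norm z)^2"
    using bp by (simp add: inner_diff_left inner_diff_right eG zG power2_norm_eq_inner algebra_simps)
  have ab: "2 * a * b \<le> a^2 + b^2" using sum_squares_bound[of a b] by (simp add: algebra_simps)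
  have b2: "b^2 \<le> (\<phi> \<bullet> \<phi>) * (norm z)^2"
  proof -
    have "\<bar>b\<bar> \<le> norm \<phi> * norm z" unfolding b_def by (rule Cauchy_Schwarz_ineq2)
    hence "b^2 \<le> (norm \<phi> * norm z)^2" by (metis abs_ge_zero power2_abs power_mono)
    thus ?thesis by (simp add: power_mult_distrib power2_norm_eq_inner)
  qed
  have "\<gamma> * wt * (2 * a * b) \<le> \<gamma> * wt * (a^2 + b^2)" using ab gp wt0 by (intro mult_left_mono) auto
  moreover have "\<gamma> * (wt * b^2) \<le> \<gamma> * ((1/\<mu>) * (norm z)^2)"
  proof -
    have "wt * b^2 \<le> wt * ((\<phi> \<bullet> \<phi>) * (norm z)^2)" using b2 wt0 by (intro mult_left_mono) auto
    also have "\<dots> = (wt * (\<phi> \<bullet> \<phi>)) * (norm z)^2" by simp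
    also have "\<dots> \<le> (1/\<mu>) * (norm z)^2" using wt1 by (intro mult_right_mono) auto
    finally show ?thesis using gp by (intro mult_left_mono) auto
  qed
  ultimately have "- \<gamma> * wt * a^2 + 2 * \<gamma> * wt * a * b - \<gamma> * SA - \<beta> * (norm z)^2
      \<le> - (\<beta> - \<gamma> / \<mu>) * (norm z)^2 - \<gamma> * SA"
    by (simp add: algebra_simps)
  thus ?thesis using lhs t3 unfolding G_def SA_def by simp
qed


lemma decr:
  fixes W W' :: "real \<Rightarrow> real"
  assumes ab: "a \<le> b" and fS: "finite S" and Wc: "continuous_on {a..b} W"
    and Wd: "\<And>s. s \<in> {a..b} - S \<Longrightarrow> (W has_real_derivative W' s) (at s within {a..b})"
    and Wn: "\<And>s. s \<in> {a..b} - S \<Longrightarrow> W' s \<le> 0"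
  shows "W b \<le> W a"
proof -
  let ?f = "\<lambda>s. if s \<in> S then 0 else W' s"
  have "(?f has_integral (W b - W a)) {a..b}"
  proof (rule fundamental_theorem_of_calculus_interior_strong[OF fS ab])
    fix s assume s: "s \<in> {a<..<b} - S"
    hence "(W has_real_derivative W' s) (at s within {a..b})" using Wd by auto
    moreover have "at s within {a..b} = at s" using s by (intro at_within_Icc_at) auto
    ultimately show "(W has_vector_derivative ?f s) (at s)" using s
      by (simp add: has_real_derivative_iff_has_vector_derivative)
  qed (fact Wc)
  moreover have "?f s \<le> 0" if "s \<in> {a..b}" for s using Wn that by auto
  ultimately have "W b - W a \<le> 0"
    using has_integral_le[of ?f "W b - W a" "{a..b}" "\<lambda>_. 0" 0] by auto
  thus ?thesis by simp
qed

lemma sq_sum_le: fixes u v :: "'a::real_inner"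
  shows "norm (u + v)^2 \<le> 2 * norm u ^2 + 2 * norm v ^2"
proof -
  have "0 \<le> norm (u - v)^2" by simp
  thus ?thesis by (simp add: power2_norm_eq_inner inner_add_left inner_add_right inner_diff_left inner_diff_right inner_commute)
qed



lemma hV_gen:
  fixes \<theta>s :: "real^'n" and p :: "'m::finite \<Rightarrow> real^'n" and w :: "'m \<Rightarrow> real" and q :: "(real^'n) \<times> (real^'n)"
  shows "((\<lambda>q. (1/2) * ((snd q - \<theta>s) \<bullet> (snd q - \<theta>s)) + (1/2) * ((fst q - snd q) \<bullet> (fst q - snd q))
       + (\<gamma>/\<beta>) * (\<Sum>k\<in>UNIV. w k * ((p k \<bullet> (fst q - \<theta>s)) * (p k \<bullet> (fst q - \<theta>s))))) has_derivative
     (\<lambda>d. (snd q - \<theta>s) \<bullet> snd d + (fst q - snd q) \<bullet> (fst d - snd d)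
       + (2*\<gamma>/\<beta>) * (\<Sum>k\<in>UNIV. w k * (p k \<bullet> (fst q - \<theta>s)) * (p k \<bullet> fst d)))) (at q)"
  apply (rule has_derivative_eq_rhs)
   apply (rule derivative_eq_intros refl | simp)+
  apply (simp add: fun_eq_iff inner_commute[of _ "snd q - \<theta>s"] inner_commute[of _ "fst q - snd q"] sum_distrib_left mult_ac)
  done

theorem theorem4:
  fixes \<theta>s :: "real^'n" and \<phi> :: "real \<Rightarrow> real^'n" and M :: real
    and ts :: "'m::finite \<Rightarrow> real"
    and \<beta> \<gamma> \<mu> :: real
  assumes pc: "piecewise_continuous_nonneg \<phi>"
    and M_pos: "M > 0" and bound: "\<forall>t\<ge>0. norm (\<phi> t) \<le> M"
    and ts_nonneg: "\<forall>k. ts k \<ge> 0"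
    and rank_D: "rank ((\<chi> i k. \<phi> (ts k) $ i) :: real^'m^'n) = CARD('n)"
    and \<beta>_pos: "\<beta> > 0" and \<gamma>_pos: "\<gamma> > 0" and \<mu>_pos: "\<mu> > 0"
    and \<beta>_ge: "\<beta> \<ge> 2 * \<gamma> / \<mu>"
  shows "UGAS
    (\<lambda>(\<theta>, \<theta>v) t.
       let ys = (\<lambda>s. \<phi> s \<bullet> \<theta>s);
           B = (\<Sum>k\<in>UNIV. (1 / (1 + \<mu> * (\<phi> (ts k) \<bullet> \<phi> (ts k)))) *\<^sub>R
                   ((\<phi> (ts k) \<bullet> \<theta> - ys (ts k)) *\<^sub>R \<phi> (ts k)))
       in (- \<beta> *\<^sub>R (\<theta> - \<theta>v),
           - \<gamma> *\<^sub>R ((1 / (1 + \<mu> * (\<phi> t \<bullet> \<phi> t))) *\<^sub>R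
                        ((\<phi> t \<bullet> \<theta> - ys t) *\<^sub>R \<phi> t) + B)))
    (\<theta>s, \<theta>s)"
proof -
  define wt where "wt t = 1 / (1 + \<mu> * (\<phi> t \<bullet> \<phi> t))" for t
  define p where "p k = \<phi> (ts k)" for k
  define w where "w k = wt (ts k)" for k
  define F0 :: "(real^'n) \<times> (real^'n) \<Rightarrow> real \<Rightarrow> (real^'n) \<times> (real^'n)" where
    "F0 q t = (- \<beta> *\<^sub>R (fst q - snd q),
       - \<gamma> *\<^sub>R (wt t *\<^sub>R ((\<phi> t \<bullet> (fst q - \<theta>s)) *\<^sub>R \<phi> t)
          + (\<Sum>k\<in>UNIV. w k *\<^sub>R ((p k \<bullet> (fst q - \<theta>s)) *\<^sub>R p k))))" for q t
  have Feq: "(\<lambda>(\<theta>, \<theta>v) t.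
       let ys = (\<lambda>s. \<phi> s \<bullet> \<theta>s);
           B = (\<Sum>k\<in>UNIV. (1 / (1 + \<mu> * (\<phi> (ts k) \<bullet> \<phi> (ts k)))) *\<^sub>R
                   ((\<phi> (ts k) \<bullet> \<theta> - ys (ts k)) *\<^sub>R \<phi> (ts k)))
       in (- \<beta> *\<^sub>R (\<theta> - \<theta>v),
           - \<gamma> *\<^sub>R ((1 / (1 + \<mu> * (\<phi> t \<bullet> \<phi> t))) *\<^sub>R
                        ((\<phi> t \<bullet> \<theta> - ys t) *\<^sub>R \<phi> t) + B))) = F0"
    by (auto simp: F0_def wt_def w_def p_def fun_eq_iff Let_def inner_diff_right)
  have den: "1 + \<mu> * (\<phi> t \<bullet> \<phi> t) \<ge> 1" for t
    using \<mu>_pos by simp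
  have wt_pos: "wt t > 0" for t using den[of t] by (simp add: wt_def)
  have wt_le1: "wt t \<le> 1" for t using den[of t] by (simp add: wt_def)
  have wt_mu: "wt t * (\<phi> t \<bullet> \<phi> t) \<le> 1 / \<mu>" for t
  proof -
    have "\<mu> * (\<phi> t \<bullet> \<phi> t) / (1 + \<mu> * (\<phi> t \<bullet> \<phi> t)) \<le> 1"
      using den[of t] by (subst divide_le_eq_1) auto
    thus ?thesis using \<mu>_pos by (simp add: wt_def field_simps)
  qed
  obtain c where c: "c > 0" "\<And>e. c * (norm e)^2 \<le> (\<Sum>k\<in>UNIV. w k * (p k \<bullet> e)^2)"
    using rank_lower[of p w] rank_D wt_pos wt_le1 unfolding p_def w_def by blast
  define P where "P = (\<Sum>k\<in>UNIV. norm (p k)^2)"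
  have P0: "P \<ge> 0" unfolding P_def by (simp add: sum_nonneg)
  have SA_le: "(\<Sum>k\<in>UNIV. w k * (p k \<bullet> e)^2) \<le> P * (norm e)^2" for e
  proof -
    have "(\<Sum>k\<in>UNIV. w k * (p k \<bullet> e)^2) \<le> (\<Sum>k\<in>UNIV. norm (p k)^2 * (norm e)^2)"
    proof (intro sum_mono)
      fix k
      have "\<bar>p k \<bullet> e\<bar> \<le> norm (p k) * norm e" by (rule Cauchy_Schwarz_ineq2)
      hence "(p k \<bullet> e)^2 \<le> (norm (p k) * norm e)^2" by (metis abs_ge_zero power2_abs power_mono)
      moreover have "w k * (p k \<bullet> e)^2 \<le> (p k \<bullet> e)^2"
        using wt_le1[of "ts k"] wt_pos[of "ts k"] unfolding w_def by (simp add: mult_left_le_one_le)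
      ultimately show "w k * (p k \<bullet> e)^2 \<le> norm (p k)^2 * (norm e)^2" by (simp add: power_mult_distrib)
    qed
    thus ?thesis by (simp add: P_def sum_distrib_right)
  qed
  define V :: "(real^'n) \<times> (real^'n) \<Rightarrow> real" where
    "V q = (1/2) * ((snd q - \<theta>s) \<bullet> (snd q - \<theta>s)) + (1/2) * ((fst q - snd q) \<bullet> (fst q - snd q))
       + (\<gamma>/\<beta>) * (\<Sum>k\<in>UNIV. w k * ((p k \<bullet> (fst q - \<theta>s)) * (p k \<bullet> (fst q - \<theta>s))))" for q
  define DV :: "(real^'n) \<times> (real^'n) \<Rightarrow> (real^'n) \<times> (real^'n) \<Rightarrow> real" where
    "DV q d = (snd q - \<theta>s) \<bullet> snd d + (fst q - snd q) \<bullet> (fst d - snd d)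
       + (2*\<gamma>/\<beta>) * (\<Sum>k\<in>UNIV. w k * (p k \<bullet> (fst q - \<theta>s)) * (p k \<bullet> fst d))" for q d
  define K where "K = 2 + \<gamma> / \<beta> * P"
  have K1: "K \<ge> 2" using P0 \<gamma>_pos \<beta>_pos by (simp add: K_def)
  define m where "m = min (\<gamma>/\<mu>) (\<gamma> * c)"
  have m0: "m > 0" using \<gamma>_pos \<mu>_pos c(1) by (simp add: m_def)
  define \<kappa> where "\<kappa> = m / K"
  have \<kappa>0: "\<kappa> > 0" using m0 K1 by (simp add: \<kappa>_def)
  have Vsplit: "V q = (1/2) * norm (snd q - \<theta>s)^2 + (1/2) * norm (fst q - snd q)^2
       + (\<gamma>/\<beta>) * (\<Sum>k\<in>UNIV. w k * (p k \<bullet> (fst q - \<theta>s))^2)" for q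
    unfolding V_def power2_norm_eq_inner by (simp add: power2_eq_square)
  have SA0: "(\<Sum>k\<in>UNIV. w k * (p k \<bullet> e)^2) \<ge> 0" for e
    using wt_pos unfolding w_def by (intro sum_nonneg) (simp add: less_imp_le)
  have pair_norm: "norm (q - (\<theta>s, \<theta>s))^2 = norm (fst q - \<theta>s)^2 + norm (snd q - \<theta>s)^2" for q
    by (cases q) (simp add: norm_Pair)
  have V_lower: "norm (q - (\<theta>s, \<theta>s))^2 \<le> 6 * V q" for q
  proof -
    have "fst q - \<theta>s = (snd q - \<theta>s) + (fst q - snd q)" by simp
    hence "norm (fst q - \<theta>s)^2 \<le> 2 * norm (snd q - \<theta>s)^2 + 2 * norm (fst q - snd q)^2"
      by (metis sq_sum_le)
    moreover have "0 \<le> (\<gamma>/\<beta>) * (\<Sum>k\<in>UNIV. w k * (p k \<bullet> (fst q - \<theta>s))^2)"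
      using SA0[of "fst q - \<theta>s"] \<gamma>_pos \<beta>_pos by simp
    moreover have "0 \<le> norm (fst q - snd q)^2" by simp
    ultimately show ?thesis unfolding pair_norm Vsplit
      by (simp only: distrib_left; linarith)
  qed
  have V_upper: "V q \<le> K * norm (q - (\<theta>s, \<theta>s))^2" for q
  proof -
    have "fst q - snd q = (fst q - \<theta>s) + (- (snd q - \<theta>s))" by simp
    hence "norm (fst q - snd q)^2 \<le> 2 * norm (fst q - \<theta>s)^2 + 2 * norm (snd q - \<theta>s)^2"
      by (metis sq_sum_le norm_minus_cancel)
    moreover have "(\<gamma>/\<beta>) * (\<Sum>k\<in>UNIV. w k * (p k \<bullet> (fst q - \<theta>s))^2) \<le> (\<gamma>/\<beta>) * (P * norm (fst q - \<theta>s)^2)"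
      using SA_le \<gamma>_pos \<beta>_pos by (intro mult_left_mono) auto
    moreover have "0 \<le> (\<gamma>/\<beta>) * (P * norm (snd q - \<theta>s)^2)"
      using P0 \<gamma>_pos \<beta>_pos by simp
    moreover have "K * norm (q - (\<theta>s, \<theta>s))^2 = 2 * norm (fst q - \<theta>s)^2 + 2 * norm (snd q - \<theta>s)^2
       + (\<gamma>/\<beta>) * (P * norm (fst q - \<theta>s)^2) + (\<gamma>/\<beta>) * (P * norm (snd q - \<theta>s)^2)"
      unfolding pair_norm K_def by (simp add: algebra_simps)
    moreover have "0 \<le> norm (snd q - \<theta>s)^2" "0 \<le> norm (fst q - \<theta>s)^2" by simp_all
    ultimately show ?thesis unfolding Vsplit
      by linarith
  qed
  have DV_bound: "DV q (F0 q t) \<le> - \<kappa> * V q" for q t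
  proof -
    define e where "e = fst q - \<theta>s"
    define z where "z = fst q - snd q"
    have ez: "e - z = snd q - \<theta>s" by (simp add: e_def z_def)
    have "DV q (F0 q t) \<le> - (\<beta> - \<gamma> / \<mu>) * (norm z)^2 - \<gamma> * (\<Sum>k\<in>UNIV. w k * (p k \<bullet> e)^2)"
      using key_ineq[OF \<beta>_pos \<gamma>_pos \<mu>_pos less_imp_le[OF wt_pos[of t]] wt_mu[of t], where e=e and z=z and p=p and w=w]
      unfolding DV_def F0_def fst_conv snd_conv ez[symmetric] e_def[symmetric] z_def[symmetric] .
    also have "\<dots> \<le> - m * ((norm e)^2 + (norm z)^2)"
    proof -
      have "\<beta> - \<gamma> / \<mu> \<ge> \<gamma> / \<mu>" using \<beta>_ge by simp
      hence "(\<beta> - \<gamma> / \<mu>) * (norm z)^2 \<ge> m * (norm z)^2" by (intro mult_right_mono) (auto simp: m_def)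
      moreover have "\<gamma> * (\<Sum>k\<in>UNIV. w k * (p k \<bullet> e)^2) \<ge> \<gamma> * (c * (norm e)^2)"
        using c(2)[of e] \<gamma>_pos by (intro mult_left_mono) auto
      moreover have "\<gamma> * (c * (norm e)^2) \<ge> m * (norm e)^2"
        unfolding mult.assoc[symmetric] by (intro mult_right_mono) (auto simp: m_def)
      ultimately show ?thesis by (simp add: algebra_simps)
    qed
    also have "\<dots> \<le> - \<kappa> * V q"
    proof -
      have "snd q - \<theta>s = e + (- z)" by (simp add: e_def z_def)
      hence "norm (snd q - \<theta>s)^2 \<le> 2 * norm e^2 + 2 * norm z ^2" by (metis sq_sum_le norm_minus_cancel)
      moreover have "(\<gamma>/\<beta>) * (\<Sum>k\<in>UNIV. w k * (p k \<bullet> e)^2) \<le> (\<gamma>/\<beta>) * (P * norm e^2)"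
        using SA_le \<gamma>_pos \<beta>_pos by (intro mult_left_mono) auto
      moreover have "0 \<le> (\<gamma>/\<beta>) * (P * norm z^2)"
        using P0 \<gamma>_pos \<beta>_pos by simp
      moreover have "K * ((norm e)^2 + (norm z)^2) = 2 * norm e^2 + 2 * norm z^2
         + (\<gamma>/\<beta>) * (P * norm e^2) + (\<gamma>/\<beta>) * (P * norm z^2)"
        unfolding K_def by (simp add: algebra_simps)
      moreover have "0 \<le> norm e^2" "0 \<le> norm z^2" by simp_all
      ultimately have "V q \<le> K * ((norm e)^2 + (norm z)^2)"
        unfolding Vsplit e_def[symmetric] z_def[symmetric] by linarith
      hence "\<kappa> * V q \<le> \<kappa> * (K * ((norm e)^2 + (norm z)^2))" using \<kappa>0 by (intro mult_left_mono) auto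
      also have "\<dots> = m * ((norm e)^2 + (norm z)^2)" using K1 by (simp add: \<kappa>_def)
      finally show ?thesis by simp
    qed
    finally show ?thesis .
  qed
  have den_ne: "1 + \<mu> * (\<phi> t \<bullet> \<phi> t) \<noteq> 0" for t using den[of t] by linarith
  have DV_lin: "DV q (h *\<^sub>R v) = h * DV q v" for q h v
    by (simp add: DV_def inner_scaleR_right sum_distrib_left algebra_simps)
  have hV: "(V has_derivative DV q) (at q)" for q
    unfolding V_def[abs_def] DV_def[abs_def] by (rule hV_gen)
  have decay: "V (x t) \<le> exp (- \<kappa> * (t - t0)) * V (x t0)"
    if t0: "t0 \<ge> 0" and sol: "is_solution F0 t0 x" and tt: "t \<ge> t0" for t0 x t
  proof -
    define g where "g s = F0 (x s) s" for s
    have hi: "(g has_integral (x u - x t0)) {t0..u}" if "u \<ge> t0" for u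
      using sol that unfolding is_solution_def g_def by blast
    have gi: "g integrable_on {t0..t}" using hi[OF tt] by blast
    have xeq: "x u = x t0 + integral {t0..u} g" if "u \<in> {t0..t}" for u
      using integral_unique[OF hi[of u]] that by simp
    have xc: "continuous_on {t0..t} x"
    proof -
      have "continuous_on {t0..t} (\<lambda>u. x t0 + integral {t0..u} g)"
        by (intro continuous_on_add continuous_on_const indefinite_integral_continuous_1 gi)
      thus ?thesis using continuous_on_eq xeq by (metis (no_types, lifting))
    qed
    obtain S where fS: "finite S" and Sc: "\<forall>s\<in>{0..t} - S. continuous (at s within {0..}) \<phi>"
      using pc[unfolded piecewise_continuous_nonneg_def, rule_format, of t] tt t0 by auto
    define W where "W s = exp (\<kappa> * s) * V (x s)" for s
    define W' where "W' s = exp (\<kappa> * s) * (\<kappa> * V (x s) + DV (x s) (g s))" for s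
    have "W t \<le> W t0"
    proof (rule decr[OF tt fS])
      show "continuous_on {t0..t} W" unfolding W_def V_def by (intro continuous_intros xc)
    next
      fix s assume s: "s \<in> {t0..t} - S"
      have \<phi>c: "continuous (at s within {t0..t}) \<phi>"
      proof -
        have "continuous (at s within {0..}) \<phi>" using Sc s t0 by auto
        thus ?thesis by (rule continuous_within_subset) (use t0 in auto)
      qed
      have xcs: "continuous (at s within {t0..t}) x"
        using xc s by (simp add: continuous_on_eq_continuous_within)
      have gc: "continuous (at s within {t0..t}) g"
        unfolding g_def F0_def wt_def using den_ne
        by (intro continuous_intros \<phi>c xcs) auto
      have i1: "((\<lambda>u. integral {t0..u} g) has_vector_derivative g s) (at s within {t0..t})"
        using integral_has_vector_derivative_continuous_at[OF gi, of s "{}"] s gc by simp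
      have i2: "((\<lambda>u. x t0 + integral {t0..u} g) has_vector_derivative g s) (at s within {t0..t})"
        using has_vector_derivative_add[OF has_vector_derivative_const i1] by simp
      have xd: "(x has_vector_derivative g s) (at s within {t0..t})"
        using s by (intro has_vector_derivative_transform[OF _ xeq i2]) auto
      have "((\<lambda>u. V (x u)) has_derivative (\<lambda>h. DV (x s) (h *\<^sub>R g s))) (at s within {t0..t})"
        using has_derivative_compose[OF xd[unfolded has_vector_derivative_def] hV] .
      hence Vd: "((\<lambda>u. V (x u)) has_real_derivative DV (x s) (g s)) (at s within {t0..t})"
        unfolding has_field_derivative_def DV_lin by (simp add: mult.commute[of _ "DV (x s) (g s)"])
      have ed: "((\<lambda>u. exp (\<kappa> * u)) has_real_derivative exp (\<kappa> * s) * \<kappa>) (at s within {t0..t})"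
        by (auto intro!: derivative_eq_intros)
      show "(W has_real_derivative W' s) (at s within {t0..t})"
        unfolding W_def by (rule DERIV_cong[OF DERIV_mult[OF ed Vd]]) (simp add: W'_def algebra_simps)
      have "DV (x s) (g s) \<le> - \<kappa> * V (x s)" unfolding g_def by (rule DV_bound)
      hence "\<kappa> * V (x s) + DV (x s) (g s) \<le> 0" by simp
      thus "W' s \<le> 0" unfolding W'_def by (simp add: mult_nonneg_nonpos)
    qed
    have e1: "exp (- \<kappa> * t) * exp (\<kappa> * t) = 1" by (subst mult_exp_exp) simp
    have e2: "exp (- \<kappa> * t) * exp (\<kappa> * t0) = exp (- \<kappa> * (t - t0))"
      by (subst mult_exp_exp) (simp add: algebra_simps)
    have "V (x t) = exp (- \<kappa> * t) * W t" unfolding W_def mult.assoc[symmetric] e1 by simp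
    also have "\<dots> \<le> exp (- \<kappa> * t) * W t0" using \<open>W t \<le> W t0\<close> by simp
    also have "\<dots> = exp (- \<kappa> * (t - t0)) * V (x t0)"
      unfolding W_def mult.assoc[symmetric] e2 ..
    finally show ?thesis .
  qed
  have V0: "V q \<ge> 0" for q using V_lower[of q] by (smt (verit) zero_le_power2)
  define C where "C = sqrt (6 * K)"
  have C0: "C > 0" using K1 by (simp add: C_def)
  have sq_decay: "norm (x t - (\<theta>s, \<theta>s))^2 \<le> 6 * K * exp (- \<kappa> * (t - t0)) * norm (x t0 - (\<theta>s, \<theta>s))^2"
    if t0: "t0 \<ge> 0" and sol: "is_solution F0 t0 x" and tt: "t \<ge> t0" for t0 x t
  proof -
    have "norm (x t - (\<theta>s, \<theta>s))^2 \<le> 6 * V (x t)" by (rule V_lower)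
    also have "\<dots> \<le> 6 * (exp (- \<kappa> * (t - t0)) * V (x t0))" using decay[OF t0 sol tt] by simp
    also have "\<dots> \<le> 6 * (exp (- \<kappa> * (t - t0)) * (K * norm (x t0 - (\<theta>s, \<theta>s))^2))"
      using V_upper[of "x t0"] by (intro mult_left_mono) auto
    finally show ?thesis by (simp add: mult_ac)
  qed
  have UGS: "UGS F0 (\<theta>s, \<theta>s)"
    unfolding UGS_def
  proof (intro exI conjI allI impI)
    show "class_K_inf (\<lambda>r. C * r)"
      unfolding class_K_inf_def
    proof (intro conjI)
      show "continuous_on {0..} (\<lambda>r. C * r)" by (intro continuous_intros)
      show "strict_mono_on {0..} (\<lambda>r. C * r)" using C0 by (simp add: strict_mono_on_def)
      show "filterlim (\<lambda>r. C * r) at_top at_top"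
        by (rule filterlim_tendsto_pos_mult_at_top[OF tendsto_const C0 filterlim_ident])
    qed simp
    fix t0 x t assume t0: "0 \<le> t0" and sol: "is_solution F0 t0 x" and tt: "t0 \<le> t"
    have "norm (x t - (\<theta>s, \<theta>s))^2 \<le> 6 * K * exp (- \<kappa> * (t - t0)) * norm (x t0 - (\<theta>s, \<theta>s))^2"
      by (rule sq_decay[OF t0 sol tt])
    also have "\<dots> \<le> 6 * K * norm (x t0 - (\<theta>s, \<theta>s))^2"
      using \<kappa>0 tt K1 by (intro mult_right_mono) auto
    also have "\<dots> = (C * norm (x t0 - (\<theta>s, \<theta>s)))^2"
      using K1 by (simp add: C_def power_mult_distrib)
    finally show "norm (x t - (\<theta>s, \<theta>s)) \<le> C * norm (x t0 - (\<theta>s, \<theta>s))"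
      by (rule power2_le_imp_le) (use C0 in simp)
  qed
  have UGA: "UGA F0 (\<theta>s, \<theta>s)"
    unfolding UGA_def
  proof (intro allI impI)
    fix r \<sigma> :: real assume r: "r > 0" and \<sigma>: "\<sigma> > 0"
    define A where "A = 6 * K * r^2 / \<sigma>^2"
    have A0: "A > 0" using K1 r \<sigma> by (simp add: A_def)
    define T where "T = 1 + \<bar>ln A\<bar> / \<kappa>"
    have T0: "T > 0" using \<kappa>0 by (simp add: T_def add_pos_nonneg)
    show "\<exists>T'>0. \<forall>t0\<ge>0. \<forall>x. is_solution F0 t0 x \<longrightarrow> norm (x t0 - (\<theta>s, \<theta>s)) \<le> r \<longrightarrow>
        (\<forall>t\<ge>t0 + T'. norm (x t - (\<theta>s, \<theta>s)) \<le> \<sigma>)"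
    proof (intro exI[of _ T] conjI T0 allI impI)
      fix t0 x t assume t0: "0 \<le> t0" and sol: "is_solution F0 t0 x"
        and xr: "norm (x t0 - (\<theta>s, \<theta>s)) \<le> r" and tt: "t0 + T \<le> t"
      have "exp (- \<kappa> * (t - t0)) \<le> exp (- \<kappa> * T)"
        using tt \<kappa>0 by (simp add: mult_left_mono)
      also have "- \<kappa> * T \<le> - ln A"
      proof -
        have "\<kappa> * T = \<kappa> + \<bar>ln A\<bar>" using \<kappa>0 by (simp add: T_def distrib_left)
        thus ?thesis using \<kappa>0 by linarith
      qed
      hence "exp (- \<kappa> * T) \<le> exp (- ln A)" by simp
      also have "\<dots> = 1 / A" using A0 by (simp add: exp_minus inverse_eq_divide)
      finally have ex: "exp (- \<kappa> * (t - t0)) \<le> 1 / A" .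
      have nr: "norm (x t0 - (\<theta>s, \<theta>s))^2 \<le> r^2" using xr by (simp add: power_mono)
      have "norm (x t - (\<theta>s, \<theta>s))^2 \<le> 6 * K * exp (- \<kappa> * (t - t0)) * norm (x t0 - (\<theta>s, \<theta>s))^2"
        by (rule sq_decay[OF t0 sol]) (use tt T0 in simp)
      also have "\<dots> \<le> 6 * K * (1 / A) * r^2"
        using ex nr K1 A0 by (intro mult_mono) auto
      also have "\<dots> = \<sigma>^2" using K1 r \<sigma> by (simp add: A_def)
      finally show "norm (x t - (\<theta>s, \<theta>s)) \<le> \<sigma>"
        by (rule power2_le_imp_le) (use \<sigma> in simp)
    qed
  qed
  show ?thesis unfolding Feq UGAS_def using UGS UGA by blast
qed

end
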